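(* In the directed variant of the greedy routing network creation game on any finite point set $\mathcal P$ in any metric space, a strategy profile is a pure Nash equilibrium if and only if it is a social optimum.
   Context: Let $\mathcal P$ be a finite set of $n\ge2$ points (agents) in a metric space with metric $d$. In the directed variant each agent $u$ chooses a strategy $S_u\subseteq\{(u,v):v\in\mathcal P\setminus\{u\}\}$ of directed edges, which it owns. A profile $\mathbf s=(S_u)_u$ induces the directed network $G(\mathbf s)=(\mathcal P,\bigcup_u S_u)$. A greedy routing path from $u$ to $w$ is a directed path $(x_1=u,\dots,x_j=w)$ in $G(\mathbf s)$ with $d(x_i,w)>d(x_{i+1},w)$ for all $i$; $u$ is greedy connected if it has a greedy routing path to every other agent. The cost of $u$ is $c_u(\mathbf s)=|S_u|$ if $u$ is greedy connected in $G(\mathbf s)$ and $\infty$ otherwise; the social cost is $c(\mathbf s)=\sum_u c_u(\mathbf s)$. A pure Nash equilibrium (NE) is a profile in which no agent can strictly decrease its cost by unilaterally changing its strategy; a social optimum (SO) is a profile minimizing the social cost. *)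

theory Defs
  imports Main "HOL-Library.Extended_Nat"
begin

definition metric_on :: "'a set \<Rightarrow> ('a \<Rightarrow> 'a \<Rightarrow> real) \<Rightarrow> bool" where
  "metric_on P d \<longleftrightarrow>
     (\<forall>x\<in>P. \<forall>y\<in>P. d x y \<ge> 0 \<and> (d x y = 0 \<longleftrightarrow> x = y) \<and> d x y = d y x) \<and>
     (\<forall>x\<in>P. \<forall>y\<in>P. \<forall>z\<in>P. d x z \<le> d x y + d y z)"

definition strategies :: "'a set \<Rightarrow> 'a \<Rightarrow> ('a \<times> 'a) set set" where
  "strategies P u = Pow {(u, v) | v. v \<in> P \<and> v \<noteq> u}"

definition valid_profile :: "'a set \<Rightarrow> ('a \<Rightarrow> ('a \<times> 'a) set) \<Rightarrow> bool" where
  "valid_profile P s \<longleftrightarrow> (\<forall>u\<in>P. s u \<in> strategies P u)"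

definition edges :: "'a set \<Rightarrow> ('a \<Rightarrow> ('a \<times> 'a) set) \<Rightarrow> ('a \<times> 'a) set" where
  "edges P s = (\<Union>u\<in>P. s u)"

definition greedy_path :: "('a \<Rightarrow> 'a \<Rightarrow> real) \<Rightarrow> ('a \<times> 'a) set \<Rightarrow> 'a list \<Rightarrow> 'a \<Rightarrow> 'a \<Rightarrow> bool" where
  "greedy_path d E xs u w \<longleftrightarrow> xs \<noteq> [] \<and> hd xs = u \<and> last xs = w \<and>
     (\<forall>i. Suc i < length xs \<longrightarrow> (xs ! i, xs ! Suc i) \<in> E \<and> d (xs ! i) w > d (xs ! Suc i) w)"

definition greedy_connected :: "'a set \<Rightarrow> ('a \<Rightarrow> 'a \<Rightarrow> real) \<Rightarrow> ('a \<times> 'a) set \<Rightarrow> 'a \<Rightarrow> bool" where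
  "greedy_connected P d E u \<longleftrightarrow> (\<forall>w\<in>P - {u}. \<exists>xs. greedy_path d E xs u w)"

definition agent_cost :: "'a set \<Rightarrow> ('a \<Rightarrow> 'a \<Rightarrow> real) \<Rightarrow> ('a \<Rightarrow> ('a \<times> 'a) set) \<Rightarrow> 'a \<Rightarrow> enat" where
  "agent_cost P d s u = (if greedy_connected P d (edges P s) u then enat (card (s u)) else \<infinity>)"

definition social_cost :: "'a set \<Rightarrow> ('a \<Rightarrow> 'a \<Rightarrow> real) \<Rightarrow> ('a \<Rightarrow> ('a \<times> 'a) set) \<Rightarrow> enat" where
  "social_cost P d s = (\<Sum>u\<in>P. agent_cost P d s u)"

definition nash_equilibrium :: "'a set \<Rightarrow> ('a \<Rightarrow> 'a \<Rightarrow> real) \<Rightarrow> ('a \<Rightarrow> ('a \<times> 'a) set) \<Rightarrow> bool" where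
  "nash_equilibrium P d s \<longleftrightarrow> valid_profile P s \<and>
     (\<forall>u\<in>P. \<forall>S'\<in>strategies P u. agent_cost P d s u \<le> agent_cost P d (s(u := S')) u)"

definition social_optimum :: "'a set \<Rightarrow> ('a \<Rightarrow> 'a \<Rightarrow> real) \<Rightarrow> ('a \<Rightarrow> ('a \<times> 'a) set) \<Rightarrow> bool" where
  "social_optimum P d s \<longleftrightarrow> valid_profile P s \<and>
     (\<forall>s'. valid_profile P s' \<longrightarrow> social_cost P d s \<le> social_cost P d s')"

end

theory Submission
  imports Defs
begin

definition locL :: "'a set \<Rightarrow> ('a \<Rightarrow> 'a \<Rightarrow> real) \<Rightarrow> 'a \<Rightarrow> ('a \<times> 'a) set \<Rightarrow> bool" where
  "locL P d u S \<longleftrightarrow> (\<forall>w\<in>P - {u}. \<exists>v. (u, v) \<in> S \<and> d v w < d u w)"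

lemma edge_owner:
  assumes "valid_profile P s" "(x, v) \<in> edges P s"
  shows "(x, v) \<in> s x \<and> v \<in> P \<and> x \<in> P"
proof -
  from assms(2) obtain y where y: "y \<in> P" "(x, v) \<in> s y" unfolding edges_def by blast
  with assms(1) have "s y \<subseteq> {(y, v) | v. v \<in> P \<and> v \<noteq> y}"
    unfolding valid_profile_def strategies_def by blast
  with y show ?thesis by blast
qed

lemma conn_L:
  assumes "valid_profile P s" "u \<in> P" "greedy_connected P d (edges P s) u"
  shows "locL P d u (s u)"
  unfolding locL_def
proof
  fix w assume w: "w \<in> P - {u}"
  with assms(3) obtain xs where g: "greedy_path d (edges P s) xs u w"
    unfolding greedy_connected_def by blast
  hence ne: "xs \<noteq> []" and h: "hd xs = u" and l: "last xs = w" unfolding greedy_path_def by auto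
  have "length xs \<noteq> 1"
  proof
    assume "length xs = 1"
    then obtain a where "xs = [a]" by (cases xs) auto
    with h l w show False by auto
  qed
  with ne have len: "Suc 0 < length xs" by (cases xs) auto
  with g have e: "(xs ! 0, xs ! Suc 0) \<in> edges P s" "d (xs ! Suc 0) w < d (xs ! 0) w"
    unfolding greedy_path_def by blast+
  have "xs ! 0 = u" using ne h by (simp add: hd_conv_nth)
  with e edge_owner[OF assms(1)] show "\<exists>v. (u, v) \<in> s u \<and> d v w < d u w" by metis
qed

lemma greedy_cons:
  assumes "greedy_path d E ys v w" "(u, v) \<in> E" "d v w < d u w"
  shows "greedy_path d E (u # ys) u w"
proof -
  have ne: "ys \<noteq> []" and h: "hd ys = v" and l: "last ys = w"
    and st: "\<forall>i. Suc i < length ys \<longrightarrow> (ys ! i, ys ! Suc i) \<in> E \<and> d (ys ! Suc i) w < d (ys ! i) w"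
    using assms(1) unfolding greedy_path_def by auto
  have y0: "ys ! 0 = v" using ne h by (simp add: hd_conv_nth)
  show ?thesis unfolding greedy_path_def
  proof (intro conjI)
    show "last (u # ys) = w" using ne l by simp
  next
    show "\<forall>i. Suc i < length (u # ys) \<longrightarrow> ((u # ys) ! i, (u # ys) ! Suc i) \<in> E \<and> d ((u # ys) ! Suc i) w < d ((u # ys) ! i) w"
    proof (intro allI impI)
    fix i assume "Suc i < length (u # ys)"
    then show "((u # ys) ! i, (u # ys) ! Suc i) \<in> E \<and> d ((u # ys) ! Suc i) w < d ((u # ys) ! i) w"
      using st y0 assms(2,3) by (cases i) auto
    qed
  qed simp_all
qed

lemma L_conn:
  assumes fin: "finite P" and vp: "valid_profile P s" and L: "\<forall>u\<in>P. locL P d u (s u)"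
    and w: "w \<in> P"
  shows "\<forall>u\<in>P. card {x\<in>P. d x w < d u w} = n \<longrightarrow> (\<exists>xs. greedy_path d (edges P s) xs u w)"
proof (induction n rule: less_induct)
  case (less n)
  show ?case
  proof (intro ballI impI)
    fix u assume u: "u \<in> P" and c: "card {x\<in>P. d x w < d u w} = n"
    show "\<exists>xs. greedy_path d (edges P s) xs u w"
    proof (cases "u = w")
      case True
      then show ?thesis by (intro exI[of _ "[w]"]) (simp add: greedy_path_def)
    next
      case False
      with L u w obtain v where v: "(u, v) \<in> s u" "d v w < d u w"
        unfolding locL_def by blast
      have ve: "(u, v) \<in> edges P s" using v u unfolding edges_def by blast
      then have vP: "v \<in> P" using edge_owner[OF vp] by blast
      have "{x\<in>P. d x w < d v w} \<subset> {x\<in>P. d x w < d u w}"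
        using v vP by auto
      then have "card {x\<in>P. d x w < d v w} < n" using c fin
        by (metis (no_types, lifting) finite_subset mem_Collect_eq psubset_card_mono subsetI)
      with less vP obtain ys where "greedy_path d (edges P s) ys v w" by blast
      with greedy_cons[OF this ve v(2)] show ?thesis by blast
    qed
  qed
qed

lemma L_conn_all:
  assumes fin: "finite P" and vp: "valid_profile P s" and L: "\<forall>u\<in>P. locL P d u (s u)"
    and u: "u \<in> P"
  shows "greedy_connected P d (edges P s) u"
  unfolding greedy_connected_def
  using L_conn[OF fin vp L] u by blast

lemma valid_upd:
  assumes "valid_profile P s" "S' \<in> strategies P u"
  shows "valid_profile P (s(u := S'))"
  using assms unfolding valid_profile_def by auto

lemma sum_enat: "finite A \<Longrightarrow> (\<Sum>u\<in>A. enat (f u)) = enat (\<Sum>u\<in>A. f u)"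
  by (induction A rule: finite_induct) (auto simp: plus_enat_simps zero_enat_def)

definition good :: "'a set \<Rightarrow> ('a \<Rightarrow> 'a \<Rightarrow> real) \<Rightarrow> ('a \<Rightarrow> ('a \<times> 'a) set) \<Rightarrow> bool" where
  "good P d s \<longleftrightarrow> (\<forall>u\<in>P. s u \<in> strategies P u \<and> locL P d u (s u) \<and>
      (\<forall>S'\<in>strategies P u. locL P d u S' \<longrightarrow> card (s u) \<le> card S'))"

lemma finite_strat: "finite P \<Longrightarrow> S \<in> strategies P u \<Longrightarrow> finite S"
proof -
  assume "finite P" "S \<in> strategies P u"
  moreover have "{(u, v) | v. v \<in> P \<and> v \<noteq> u} = (\<lambda>v. (u, v)) ` (P - {u})" by auto
  ultimately show "finite S" unfolding strategies_def by (metis PowD finite_Diff finite_imageI finite_subset)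
qed

lemma good_cost:
  assumes fin: "finite P" and vp: "valid_profile P s" and g: "good P d s" and u: "u \<in> P"
  shows "agent_cost P d s u = enat (card (s u))"
proof -
  have "\<forall>u\<in>P. locL P d u (s u)" using g unfolding good_def by blast
  then show ?thesis using L_conn_all[OF fin vp _ u] unfolding agent_cost_def by simp
qed

lemma lower:
  assumes vp: "valid_profile P s'" and u: "u \<in> P" and g: "good P d s"
  shows "enat (card (s u)) \<le> agent_cost P d s' u"
proof (cases "greedy_connected P d (edges P s') u")
  case True
  then have "locL P d u (s' u)" using conn_L[OF vp u] by blast
  moreover have "s' u \<in> strategies P u" using vp u unfolding valid_profile_def by blast
  ultimately show ?thesis using g u True unfolding good_def agent_cost_def by auto
next
  case False
  then show ?thesis unfolding agent_cost_def by simp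
qed

theorem mainTheorem5:
  fixes P :: "'a set" and d :: "'a \<Rightarrow> 'a \<Rightarrow> real" and s :: "'a \<Rightarrow> ('a \<times> 'a) set"
  assumes "finite P" and "card P \<ge> 2" and "metric_on P d"
    and "valid_profile P s"
  shows "nash_equilibrium P d s \<longleftrightarrow> social_optimum P d s"
proof -
  note fin = assms(1) and vp = assms(4) and met = assms(3)
  define F where "F u = {(u, v) | v. v \<in> P \<and> v \<noteq> u}" for u
  have FS: "F u \<in> strategies P u" for u unfolding F_def strategies_def by simp
  have dpos: "d w w < d u w" if "u \<in> P" "w \<in> P" "u \<noteq> w" for u w
    using met that unfolding metric_on_def by (metis order_le_less)
  have FL: "locL P d u (F u)" if "u \<in> P" for u
    unfolding locL_def F_def using dpos that by auto
  have ex_opt: "\<exists>S. S \<in> strategies P u \<and> locL P d u S \<and>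
      (\<forall>S'\<in>strategies P u. locL P d u S' \<longrightarrow> card S \<le> card S')" if "u \<in> P" for u
    using ex_has_least_nat[of "\<lambda>S. S \<in> strategies P u \<and> locL P d u S" "F u" card] FS FL that
    by blast
  have G2: "good P d s" if "social_optimum P d s"
  proof -
    define t where "t u = (SOME S. S \<in> strategies P u \<and> locL P d u S \<and>
      (\<forall>S'\<in>strategies P u. locL P d u S' \<longrightarrow> card S \<le> card S'))" for u
    have tp: "t u \<in> strategies P u \<and> locL P d u (t u) \<and>
      (\<forall>S'\<in>strategies P u. locL P d u S' \<longrightarrow> card (t u) \<le> card S')" if "u \<in> P" for u
      unfolding t_def using someI_ex[OF ex_opt[OF that]] .
    have gt: "good P d t" unfolding good_def using tp by blast
    have vt: "valid_profile P t" unfolding valid_profile_def using tp by blast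
    have "social_cost P d s \<le> social_cost P d t" using that vt unfolding social_optimum_def by blast
    also have "social_cost P d t = enat (\<Sum>u\<in>P. card (t u))"
      unfolding social_cost_def using good_cost[OF fin vt gt] sum_enat[OF fin] by simp
    finally have sc: "social_cost P d s \<le> enat (\<Sum>u\<in>P. card (t u))" .
    have conn: "greedy_connected P d (edges P s) u" if "u \<in> P" for u
    proof (rule ccontr)
      assume "\<not> ?thesis"
      then have "agent_cost P d s u = \<infinity>" unfolding agent_cost_def by simp
      moreover have "agent_cost P d s u \<le> social_cost P d s"
        unfolding social_cost_def by (rule member_le_sum[OF that]) (simp_all add: fin)
      ultimately show False using sc by simp
    qed
    have Ls: "locL P d u (s u)" if "u \<in> P" for u using conn_L[OF vp that conn[OF that]] .
    have sS: "s u \<in> strategies P u" if "u \<in> P" for u using vp that unfolding valid_profile_def by blast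
    have le: "card (t u) \<le> card (s u)" if "u \<in> P" for u using tp[OF that] Ls[OF that] sS[OF that] by blast
    have "social_cost P d s = enat (\<Sum>u\<in>P. card (s u))"
      unfolding social_cost_def agent_cost_def using conn sum_enat[OF fin] by simp
    with sc have "(\<Sum>u\<in>P. card (s u)) \<le> (\<Sum>u\<in>P. card (t u))" by simp
    moreover have "(\<Sum>u\<in>P. card (t u)) \<le> (\<Sum>u\<in>P. card (s u))" using le by (simp add: sum_mono)
    ultimately have sumeq: "(\<Sum>u\<in>P. card (t u)) = (\<Sum>u\<in>P. card (s u))" by simp
    have eq: "card (t u) = card (s u)" if "u \<in> P" for u
      using sum_mono_inv[of "\<lambda>u. card (t u)" P "\<lambda>u. card (s u)", OF sumeq le that fin] by blast
    show ?thesis unfolding good_def using tp eq Ls sS by fastforce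
  qed
  have S2: "social_optimum P d s" if g: "good P d s"
    unfolding social_optimum_def
  proof (intro conjI allI impI)
    fix s' assume vs: "valid_profile P s'"
    show "social_cost P d s \<le> social_cost P d s'" unfolding social_cost_def
      using good_cost[OF fin vp g] lower[OF vs _ g] by (intro sum_mono) simp
  qed (rule vp)
  have N2: "nash_equilibrium P d s" if g: "good P d s"
    unfolding nash_equilibrium_def
  proof (intro conjI ballI)
    fix u S' assume u: "u \<in> P" and S': "S' \<in> strategies P u"
    show "agent_cost P d s u \<le> agent_cost P d (s(u := S')) u"
      using good_cost[OF fin vp g u] lower[OF valid_upd[OF vp S'] u g] by simp
  qed (rule vp)
  have G1: "good P d s" if ne: "nash_equilibrium P d s"
  proof -
    have conn: "greedy_connected P d (edges P s) u" if u: "u \<in> P" for u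
    proof (rule ccontr)
      assume "\<not> ?thesis"
      then have "agent_cost P d s u = \<infinity>" unfolding agent_cost_def by simp
      moreover have "greedy_connected P d (edges P (s(u := F u))) u"
        unfolding greedy_connected_def
      proof
        fix w assume w: "w \<in> P - {u}"
        have "(u, w) \<in> edges P (s(u := F u))" unfolding edges_def F_def using u w by auto
        then show "\<exists>xs. greedy_path d (edges P (s(u := F u))) xs u w"
          using dpos[OF u _ ] w by (intro exI[of _ "[u, w]"]) (auto simp: greedy_path_def)
      qed
      then have "agent_cost P d (s(u := F u)) u \<noteq> \<infinity>" unfolding agent_cost_def by simp
      moreover have "agent_cost P d s u \<le> agent_cost P d (s(u := F u)) u"
        using ne u FS unfolding nash_equilibrium_def by blast
      ultimately show False by simp
    qed
    have Ls: "\<forall>u\<in>P. locL P d u (s u)" using conn_L[OF vp] conn by blast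
    show ?thesis unfolding good_def
    proof (rule ballI, intro conjI)
      fix u assume u: "u \<in> P"
      show "s u \<in> strategies P u" using vp u unfolding valid_profile_def by blast
      show "locL P d u (s u)" using Ls u by blast
      show "\<forall>S'\<in>strategies P u. locL P d u S' \<longrightarrow> card (s u) \<le> card S'"
      proof (intro ballI impI)
        fix S' assume S': "S' \<in> strategies P u" and LS: "locL P d u S'"
        have v2: "valid_profile P (s(u := S'))" using valid_upd[OF vp S'] .
        have "\<forall>x\<in>P. locL P d x ((s(u := S')) x)" using Ls LS by auto
        then have "greedy_connected P d (edges P (s(u := S'))) u" using L_conn_all[OF fin v2 _ u] by blast
        then have "agent_cost P d (s(u := S')) u = enat (card S')" unfolding agent_cost_def by simp
        moreover have "agent_cost P d s u = enat (card (s u))" using conn[OF u] unfolding agent_cost_def by simp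
        moreover have "agent_cost P d s u \<le> agent_cost P d (s(u := S')) u"
          using ne u S' unfolding nash_equilibrium_def by blast
        ultimately show "card (s u) \<le> card S'" by simp
      qed
    qed
  qed
  show ?thesis using G1 G2 S2 N2 by blast
qed

end
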